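(* Let $(\mathsf K,\mathsf D)$ be a differential ring, $n\ge3$, $L=\sum_{k=0}^n\binom nk a_k\mathsf D^{n-k}$ ($a_0=1$), $u\in\mathsf K$, and let $L^{\star_u}:=(\mathsf D+a_1-u)^n+\sum_{m=2}^n\binom nm I_m(L)(\mathsf D+a_1-u)^{n-m}$ (rewritten in normal form $\sum_k\binom nk a_k^{\star_u}\mathsf D^{n-k}$, so that its first coefficient is $a_1-u$). Let $\delta=\Delta_{a_1}$. Then $W_2(L^{\star_u})=W_2(L)$, $$W_3(L^{\star_u})=W_3(L)+\tfrac32[u,W_2(L)],$$ and, if $n\ge4$, $$W_4(L^{\star_u})=W_4(L)+2[u,I_3(L)]+\tfrac65\Bigl([u,[u,W_2(L)]]-[\delta(u),W_2(L)]-2[u,\delta(W_2(L))]\Bigr).$$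
   Context: $\mathsf K$: unital associative (possibly noncommutative) ring with derivation $\mathsf D$; Ore algebra $\mathsf K\langle\mathsf D\rangle$ with $\mathsf D a=a\mathsf D+\mathsf D(a)$; $[x,y]=xy-yx$. For a monic operator $M=\sum_k\binom nk b_k\mathsf D^{n-k}$: $I_k(M)$ are the unique elements with $M=(\mathsf D+b_1)^n+\sum_{k\ge2}\binom nk I_k(M)(\mathsf D+b_1)^{n-k}$; $\Delta_{b_1}(x)=\mathsf D(x)+[b_1,x]$; $W_2(M)=I_2(M)$, $W_3(M)=I_3(M)-\frac32\Delta_{b_1}(I_2(M))$, $W_4(M)=I_4(M)-2\Delta_{b_1}(I_3(M))+\frac65\Delta_{b_1}^2(I_2(M))-\frac{3(5n+7)}{5(n+1)}I_2(M)^2$. *)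

theory Defs
  imports "HOL-Computational_Algebra.Polynomial"
begin

(* Rings containing Q: every positive integer is invertible (needed for the
   rational scalars 3/2, 6/5, ... and for uniqueness of the invariants I_k). *)
class rat_ring = ring_1 +
  assumes of_nat_invertible: "n \<noteq> 0 \<Longrightarrow> \<exists>x. of_nat n * x = 1"

definition derivation :: "('a::ring \<Rightarrow> 'a) \<Rightarrow> bool" where
  "derivation D \<longleftrightarrow> (\<forall>x y. D (x + y) = D x + D y) \<and> (\<forall>x y. D (x * y) = D x * y + x * D y)"

definition comm :: "'a::ring \<Rightarrow> 'a \<Rightarrow> 'a" where
  "comm x y = x * y - y * x"

definition nat_inv :: "nat \<Rightarrow> 'a::ring_1" where
  "nat_inv m = (THE x. of_nat m * x = 1)"

definition qK :: "int \<Rightarrow> nat \<Rightarrow> 'a::ring_1" where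
  "qK p q = of_int p * nat_inv q"

(* Elements of the Ore algebra K<D> in normal form  sum_i c_i D^i ,
   represented as 'a poly (coeff P i = c_i).  Multiplication uses
   (a D^i)(b D^j) = sum_k (i choose k) a D^k(b) D^(i-k+j). *)
definition ore_mult :: "('a::ring_1 \<Rightarrow> 'a) \<Rightarrow> 'a poly \<Rightarrow> 'a poly \<Rightarrow> 'a poly" where
  "ore_mult D P Q = (\<Sum>i\<le>degree P. \<Sum>j\<le>degree Q. \<Sum>k\<le>i.
       monom (of_nat (i choose k) * coeff P i * (D ^^ k) (coeff Q j)) (i - k + j))"

definition opD :: "'a::ring_1 poly" where "opD = monom 1 1"

definition opC :: "'a::ring_1 \<Rightarrow> 'a poly" where "opC a = monom a 0"

definition ore_pow :: "('a::ring_1 \<Rightarrow> 'a) \<Rightarrow> 'a poly \<Rightarrow> nat \<Rightarrow> 'a poly" where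
  "ore_pow D P m = (ore_mult D P ^^ m) (opC 1)"

definition Irep :: "('a::ring_1 \<Rightarrow> 'a) \<Rightarrow> nat \<Rightarrow> 'a \<Rightarrow> (nat \<Rightarrow> 'a) \<Rightarrow> 'a poly" where
  "Irep D n b I = ore_pow D (opD + opC b) n +
     (\<Sum>k=2..n. ore_mult D (opC (of_nat (n choose k) * I k)) (ore_pow D (opD + opC b) (n - k)))"

definition first_coeff :: "nat \<Rightarrow> 'a::ring_1 poly \<Rightarrow> 'a" where
  "first_coeff n M = (THE b. of_nat n * b = coeff M (n - 1))"

definition Icoefs :: "('a::ring_1 \<Rightarrow> 'a) \<Rightarrow> nat \<Rightarrow> 'a poly \<Rightarrow> nat \<Rightarrow> 'a" where
  "Icoefs D n M = (THE I. Irep D n (first_coeff n M) I = M \<and> (\<forall>k. (k < 2 \<or> n < k) \<longrightarrow> I k = 0))"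

definition Iinv :: "('a::ring_1 \<Rightarrow> 'a) \<Rightarrow> nat \<Rightarrow> nat \<Rightarrow> 'a poly \<Rightarrow> 'a" where
  "Iinv D n k M = Icoefs D n M k"

definition Delta :: "('a::ring_1 \<Rightarrow> 'a) \<Rightarrow> 'a \<Rightarrow> 'a \<Rightarrow> 'a" where
  "Delta D b x = D x + comm b x"

definition W2 :: "('a::ring_1 \<Rightarrow> 'a) \<Rightarrow> nat \<Rightarrow> 'a poly \<Rightarrow> 'a" where
  "W2 D n M = Iinv D n 2 M"

definition W3 :: "('a::ring_1 \<Rightarrow> 'a) \<Rightarrow> nat \<Rightarrow> 'a poly \<Rightarrow> 'a" where
  "W3 D n M = Iinv D n 3 M - qK 3 2 * Delta D (first_coeff n M) (Iinv D n 2 M)"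

definition W4 :: "('a::ring_1 \<Rightarrow> 'a) \<Rightarrow> nat \<Rightarrow> 'a poly \<Rightarrow> 'a" where
  "W4 D n M = Iinv D n 4 M - 2 * Delta D (first_coeff n M) (Iinv D n 3 M)
     + qK 6 5 * Delta D (first_coeff n M) (Delta D (first_coeff n M) (Iinv D n 2 M))
     - qK (3 * (5 * int n + 7)) (5 * (n + 1)) * (Iinv D n 2 M * Iinv D n 2 M)"

definition Lop :: "nat \<Rightarrow> (nat \<Rightarrow> 'a::ring_1) \<Rightarrow> 'a poly" where
  "Lop n a = (\<Sum>k\<le>n. monom (of_nat (n choose k) * a k) (n - k))"

definition Lstar :: "('a::ring_1 \<Rightarrow> 'a) \<Rightarrow> nat \<Rightarrow> (nat \<Rightarrow> 'a) \<Rightarrow> 'a \<Rightarrow> 'a poly" where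
  "Lstar D n a u = Irep D n (a 1 - u) (\<lambda>k. Iinv D n k (Lop n a))"

end

theory Submission
  imports Defs
begin

lemma der_add: "derivation D \<Longrightarrow> D (x + y) = D x + D y" by (simp add: derivation_def)
lemma der_mult: "derivation D \<Longrightarrow> D (x * y) = D x * y + x * D y" by (simp add: derivation_def)
lemma der_0: "derivation D \<Longrightarrow> D 0 = 0"
  using der_add[of D 0 0] by simp
lemma der_1: "derivation D \<Longrightarrow> D (1::'a::ring_1) = 0"
  using der_mult[of D "1::'a" 1] by simp
lemma der_minus: "derivation D \<Longrightarrow> D (- x) = - D x"
proof -
  assume d: "derivation D"
  have "D x + D (- x) = 0" using der_add[OF d, of x "-x"] der_0[OF d] by simp
  from add.inverse_unique[OF this] show ?thesis by simp
qed
lemma der_diff: "derivation D \<Longrightarrow> D (x - y) = D x - D y"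
  using der_add[of D x "-y"] der_minus[of D y] by simp

lemma degree_DC: "degree (opD + opC b :: 'a::ring_1 poly) = 1"
  unfolding opD_def opC_def by (subst degree_add_eq_left) (auto simp: degree_monom_eq monom_0)

lemma coeff_DC: "coeff (opD + opC b :: 'a::ring_1 poly) 0 = b" "coeff (opD + opC b :: 'a::ring_1 poly) 1 = 1"
  "coeff (opD :: 'a::ring_1 poly) 0 = 0" "coeff (opD :: 'a::ring_1 poly) (Suc 0) = 1"
  "coeff (opC b :: 'a::ring_1 poly) 0 = b" "coeff (opC b :: 'a::ring_1 poly) (Suc 0) = 0"
  unfolding opD_def opC_def by (auto simp: coeff_monom)

lemma coeff_ore_DC:
  assumes "derivation D"
  shows "coeff (ore_mult D (opD + opC b) Q) m =
     (if m = 0 then 0 else coeff Q (m - 1)) + b * coeff Q m + D (coeff Q m)"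
proof -
  have "coeff (ore_mult D (opD + opC b) Q) m =
     (\<Sum>j\<le>degree Q. (if j = m then b * coeff Q j else 0) + (if Suc j = m then coeff Q j else 0)
        + (if j = m then D (coeff Q j) else 0))"
    unfolding ore_mult_def degree_DC
    by (simp add: coeff_sum coeff_monom coeff_DC atMost_Suc sum.distrib[symmetric] algebra_simps)
  also have "\<dots> = (if m \<le> degree Q then b * coeff Q m else 0) + (\<Sum>j\<le>degree Q. (if Suc j = m then coeff Q j else 0))
        + (if m \<le> degree Q then D (coeff Q m) else 0)"
    by (simp add: sum.distrib)
  also have "(\<Sum>j\<le>degree Q. (if Suc j = m then coeff Q j else 0)) = (if m = 0 then 0 else coeff Q (m - 1))"
  proof (cases m)
    case (Suc m')
    then show ?thesis by (auto simp: coeff_eq_0)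
  qed simp
  finally show ?thesis using der_0[OF assms] by (auto simp: coeff_eq_0)
qed

lemma coeff_ore_C: "coeff (ore_mult D (opC c) Q) m = c * coeff Q m"
proof -
  have "coeff (ore_mult D (opC c) Q) m = (\<Sum>j\<le>degree Q. (if j = m then c * coeff Q j else 0))"
    unfolding ore_mult_def by (simp add: opC_def coeff_sum coeff_monom monom_0)
  then show ?thesis by (auto simp: coeff_eq_0)
qed

lemma pow_props:
  assumes d: "derivation D"
  shows "(\<forall>j>m. coeff (ore_pow D (opD + opC b) m) j = 0) \<and> coeff (ore_pow D (opD + opC b) m) m = 1
     \<and> (m \<ge> 1 \<longrightarrow> coeff (ore_pow D (opD + opC b) m) (m - 1) = of_nat m * b)"
proof (induction m)
  case 0
  then show ?case by (simp add: ore_pow_def opC_def coeff_monom)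
next
  case (Suc m)
  have S: "ore_pow D (opD + opC b) (Suc m) = ore_mult D (opD + opC b) (ore_pow D (opD + opC b) m)"
    by (simp add: ore_pow_def)
  note c = coeff_ore_DC[OF d, of b "ore_pow D (opD + opC b) m"]
  have 1: "\<forall>j>Suc m. coeff (ore_pow D (opD + opC b) (Suc m)) j = 0"
    using Suc der_0[OF d] by (auto simp: S c)
  have 2: "coeff (ore_pow D (opD + opC b) (Suc m)) (Suc m) = 1"
    using Suc der_0[OF d] by (auto simp: S c)
  have 3: "coeff (ore_pow D (opD + opC b) (Suc m)) m = of_nat (Suc m) * b"
  proof -
    have e: "coeff (ore_pow D (opD + opC b) (Suc m)) m = (if m = 0 then 0 else coeff (ore_pow D (opD + opC b) m) (m - 1))
       + b * coeff (ore_pow D (opD + opC b) m) m + D (coeff (ore_pow D (opD + opC b) m) m)"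
      by (simp only: S c)
    show ?thesis using Suc.IH der_1[OF d] unfolding e by (cases m) (auto simp: algebra_simps)
  qed
  show ?case using 1 2 3 by simp
qed

lemma coeff_Irep: "coeff (Irep D n b I) j = coeff (ore_pow D (opD + opC b) n) j
   + (\<Sum>k=2..n. of_nat (n choose k) * I k * coeff (ore_pow D (opD + opC b) (n - k)) j)"
  unfolding Irep_def by (simp add: coeff_sum coeff_ore_C mult.assoc)

lemma nat_cancel:
  assumes "N \<noteq> 0" "of_nat N * x = (of_nat N * y :: 'a::rat_ring)"
  shows "x = y"
proof -
  obtain z where z: "of_nat N * z = (1::'a)" using of_nat_invertible[OF assms(1)] by blast
  then have z': "z * of_nat N = 1" by (simp add: mult_of_nat_commute)
  have "z * (of_nat N * x) = z * (of_nat N * y)" using assms(2) by simp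
  then show ?thesis by (simp add: mult.assoc[symmetric] z')
qed

lemma first_coeff_eq:
  assumes "n \<noteq> 0" "coeff M (n - 1) = of_nat n * (b::'a::rat_ring)"
  shows "first_coeff n M = b"
  unfolding first_coeff_def
  using assms nat_cancel[OF assms(1)] by (intro the_equality) auto

lemma first_coeff_Irep:
  assumes d: "derivation D" and n: "n \<ge> 1"
  shows "first_coeff n (Irep D n b I) = (b::'a::rat_ring)"
proof (rule first_coeff_eq)
  show "n \<noteq> 0" using n by simp
  have "(\<Sum>k=2..n. of_nat (n choose k) * I k * coeff (ore_pow D (opD + opC b) (n - k)) (n - 1)) = 0"
    using pow_props[OF d] n by (intro sum.neutral) auto
  then show "coeff (Irep D n b I) (n - 1) = of_nat n * b"
    using pow_props[OF d, of n b] n by (simp add: coeff_Irep)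
qed

lemma first_coeff_Lop:
  assumes n: "n \<ge> 1"
  shows "first_coeff n (Lop n a) = (a 1::'a::rat_ring)"
proof (rule first_coeff_eq)
  show "n \<noteq> 0" using n by simp
  have "coeff (Lop n a) (n - 1) = (\<Sum>k\<le>n. if k = 1 then of_nat (n choose k) * a k else 0)"
    unfolding Lop_def coeff_sum coeff_monom using n by (intro sum.cong) auto
  then show "coeff (Lop n a) (n - 1) = of_nat n * a 1" using n by simp
qed

lemma Irep_inj:
  assumes d: "derivation D" and eq: "Irep D n b I = Irep D n b J"
    and sI: "\<forall>k. (k < 2 \<or> n < k) \<longrightarrow> I k = 0" and sJ: "\<forall>k. (k < 2 \<or> n < k) \<longrightarrow> J k = (0::'a::rat_ring)"
  shows "I = J"
proof -
  have main: "k \<le> n \<longrightarrow> I k = J k" for k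
  proof (induction k rule: less_induct)
    case (less k)
    show ?case
    proof
      assume kn: "k \<le> n"
      show "I k = J k"
      proof (cases "k < 2")
        case True then show ?thesis using sI sJ by simp
      next
        case False
        let ?P = "\<lambda>m. ore_pow D (opD + opC b) m"
        have ceq: "coeff (Irep D n b I) (n - k) = coeff (Irep D n b J) (n - k)" using eq by simp
        have dif: "of_nat (n choose k') * I k' * coeff (?P (n - k')) (n - k)
            - of_nat (n choose k') * J k' * coeff (?P (n - k')) (n - k)
            = (if k' = k then of_nat (n choose k) * (I k - J k) else 0)" if k': "k' \<in> {2..n}" for k'
        proof -
          consider "k' < k" | "k' = k" | "k' > k" by linarith
          then show ?thesis
          proof cases
            case 1 then show ?thesis using less.IH[of k'] k' by auto
          next
            case 2 then show ?thesis using pow_props[OF d, of "n - k" b] by (simp add: algebra_simps)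
          next
            case 3
            then have "coeff (?P (n - k')) (n - k) = 0" using pow_props[OF d, of "n - k'" b] k' kn by auto
            then show ?thesis using 3 by simp
          qed
        qed
        have "(\<Sum>k'=2..n. of_nat (n choose k') * I k' * coeff (?P (n - k')) (n - k)
            - of_nat (n choose k') * J k' * coeff (?P (n - k')) (n - k)) = 0"
          using ceq by (simp add: coeff_Irep sum_subtractf)
        also have "(\<Sum>k'=2..n. of_nat (n choose k') * I k' * coeff (?P (n - k')) (n - k)
            - of_nat (n choose k') * J k' * coeff (?P (n - k')) (n - k))
           = (\<Sum>k'=2..n. if k' = k then of_nat (n choose k) * (I k - J k) else 0)"
          using dif by (rule sum.cong[OF refl])
        also have "\<dots> = of_nat (n choose k) * (I k - J k)" using False kn by simp
        finally have "of_nat (n choose k) * (I k - J k) = of_nat (n choose k) * 0" by simp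
        from nat_cancel[OF _ this] kn show ?thesis by simp
      qed
    qed
  qed
  show ?thesis
  proof
    fix k show "I k = J k" using main[of k] sI sJ by (cases "n < k") auto
  qed
qed

lemma Irep_restrict: "Irep D n b I = Irep D n b (\<lambda>k. if 2 \<le> k \<and> k \<le> n then I k else 0)"
  unfolding Irep_def by (intro arg_cong2[where f="(+)"] refl sum.cong) auto

lemma Iinv_Irep:
  assumes d: "derivation D" and n: "n \<ge> 1" and k: "2 \<le> k" "k \<le> n"
  shows "Iinv D n k (Irep D n b I) = (I k :: 'a::rat_ring)"
proof -
  let ?J = "\<lambda>k. if 2 \<le> k \<and> k \<le> n then I k else 0"
  have "Icoefs D n (Irep D n b I) = ?J"
    unfolding Icoefs_def first_coeff_Irep[OF d n]
  proof (rule the_equality)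
    show "Irep D n b ?J = Irep D n b I \<and> (\<forall>k. k < 2 \<or> n < k \<longrightarrow> ?J k = 0)"
      using Irep_restrict[of D n b I] by auto
    fix J assume "Irep D n b J = Irep D n b I \<and> (\<forall>k. k < 2 \<or> n < k \<longrightarrow> J k = 0)"
    then show "J = ?J" using Irep_inj[OF d, of n b J ?J] Irep_restrict[of D n b I] by auto
  qed
  then show ?thesis using k by (simp add: Iinv_def)
qed

lemma Delta_minus:
  assumes d: "derivation D"
  shows "Delta D (b - u) x = Delta D b x - comm u x"
  unfolding Delta_def comm_def by (simp add: algebra_simps)

lemma Delta_comm:
  assumes d: "derivation D"
  shows "Delta D b (comm u x) = comm (Delta D b u) x + comm u (Delta D b x)"
  unfolding Delta_def comm_def by (simp add: der_diff[OF d] der_mult[OF d] der_add[OF d] algebra_simps)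

lemma Delta_diff:
  assumes d: "derivation D"
  shows "Delta D b (x - y) = Delta D b x - Delta D b y"
  unfolding Delta_def comm_def by (simp add: der_diff[OF d] algebra_simps)

lemma comm_diff: "comm u (x - y) = comm u x - comm u y"
  unfolding comm_def by (simp add: algebra_simps)

theorem mainTheorem12:
  fixes D :: "'a::rat_ring \<Rightarrow> 'a" and n :: nat and a :: "nat \<Rightarrow> 'a" and u :: 'a
  assumes "derivation D" and "n \<ge> 3" and "a 0 = 1"
  shows "W2 D n (Lstar D n a u) = W2 D n (Lop n a)
    \<and> W3 D n (Lstar D n a u) = W3 D n (Lop n a) + qK 3 2 * comm u (W2 D n (Lop n a))
    \<and> (n \<ge> 4 \<longrightarrow>
        W4 D n (Lstar D n a u) = W4 D n (Lop n a) + 2 * comm u (Iinv D n 3 (Lop n a))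
          + qK 6 5 * (comm u (comm u (W2 D n (Lop n a)))
                      - comm (Delta D (a 1) u) (W2 D n (Lop n a))
                      - 2 * comm u (Delta D (a 1) (W2 D n (Lop n a)))))"
proof -
  note d = assms(1)
  have n1: "n \<ge> 1" using assms(2) by simp
  have fs: "first_coeff n (Lstar D n a u) = a 1 - u"
    unfolding Lstar_def by (rule first_coeff_Irep[OF d n1])
  have fl: "first_coeff n (Lop n a) = a 1" by (rule first_coeff_Lop[OF n1])
  have I2: "Iinv D n 2 (Lstar D n a u) = Iinv D n 2 (Lop n a)"
    unfolding Lstar_def using assms(2) by (subst Iinv_Irep[OF d n1]) auto
  have I3: "Iinv D n 3 (Lstar D n a u) = Iinv D n 3 (Lop n a)"
    unfolding Lstar_def using assms(2) by (subst Iinv_Irep[OF d n1]) auto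
  have I4: "n \<ge> 4 \<Longrightarrow> Iinv D n 4 (Lstar D n a u) = Iinv D n 4 (Lop n a)"
    unfolding Lstar_def by (subst Iinv_Irep[OF d n1]) auto
  define i2 where "i2 = Iinv D n 2 (Lop n a)"
  define i3 where "i3 = Iinv D n 3 (Lop n a)"
  show ?thesis
  proof (intro conjI impI)
    show "W2 D n (Lstar D n a u) = W2 D n (Lop n a)" by (simp add: W2_def I2)
    show "W3 D n (Lstar D n a u) = W3 D n (Lop n a) + qK 3 2 * comm u (W2 D n (Lop n a))"
      unfolding W3_def W2_def fs fl I2 I3 Delta_minus[OF d] by (simp add: algebra_simps)
    assume n4: "n \<ge> 4"
    show "W4 D n (Lstar D n a u) = W4 D n (Lop n a) + 2 * comm u (Iinv D n 3 (Lop n a))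
          + qK 6 5 * (comm u (comm u (W2 D n (Lop n a)))
                      - comm (Delta D (a 1) u) (W2 D n (Lop n a))
                      - 2 * comm u (Delta D (a 1) (W2 D n (Lop n a))))"
      unfolding W4_def W2_def fs fl I2 I3 I4[OF n4] Delta_minus[OF d] i2_def[symmetric] i3_def[symmetric]
      by (simp add: Delta_diff[OF d] comm_diff Delta_comm[OF d] mult_2 algebra_simps)
  qed
qed

end
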